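(* Let $\lambda_1,\lambda_2\in\mathbb{C}\setminus\{0,-1,-2,\dots\}$, let $\alpha\in\mathbb{C}\setminus\{-1,-2,\dots\}$, and set $\beta=\lambda_1+\lambda_2-\alpha-2$. On $W=V_{\lambda_1}\otimes V_{\lambda_2}$ put $H^{(1)}=H\otimes\mathbb{I}$, $H^{(2)}=\mathbb{I}\otimes H$ and define $$\Delta(H)=H^{(1)}+H^{(2)},\qquad \Delta(E)=E\otimes\mathbb{I}+\mathbb{I}\otimes E,$$ $$\Delta(F)=(H^{(1)}-\lambda_1+2\alpha+2)(H^{(1)}+\lambda_1)^{-1}(F\otimes\mathbb{I})+(H^{(2)}-\lambda_2+2\beta+2)(H^{(2)}+\lambda_2)^{-1}(\mathbb{I}\otimes F)$$ (the diagonal operators $H^{(i)}+\lambda_i$ are invertible on $W$). Then (a) these operators satisfy the $sl_2$ relations $[\Delta(H),\Delta(E)]=2\Delta(E)$, $[\Delta(H),\Delta(F)]=-2\Delta(F)$, $[\Delta(E),\Delta(F)]=\Delta(H)$, i.e. they define a representation of $sl_2$ on $W$; and (b) for all integers $0\le k\le N$, the vectors $w_{k,N}=\sum_{n=0}^N R_n(k,N)\,|\lambda_1,n\rangle\otimes|\lambda_2,N-n\rangle$ satisfy $\Delta(H)w_{k,N}=(\lambda_1+\lambda_2+2N)w_{k,N}$, $\Delta(E)w_{k,N}=w_{k,N+1}$ and $\Delta(F)w_{k,N}=-(N-k)(N+k+\lambda_1+\lambda_2-1)\,w_{k,N-1}$ (with $w_{k,k-1}=0$); i.e. the $R_n(k,N)$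 are Clebsch–Gordan coefficients for this generalized coproduct of $sl_2$.
   Context: $sl_2$ is generated by $H,E,F$ with $[H,E]=2E$, $[H,F]=-2F$, $[E,F]=H$. For $\lambda\in\mathbb{C}$, $V_\lambda$ is the lowest-weight Verma module with basis $\{|\lambda,n\rangle:n\ge0\}$ and action $H|\lambda,n\rangle=(\lambda+2n)|\lambda,n\rangle$, $E|\lambda,n\rangle=|\lambda,n+1\rangle$, $F|\lambda,n\rangle=-n(n+\lambda-1)|\lambda,n-1\rangle$. The functions $R_n(k,N)$ (proportional to dual Hahn polynomials) are $$R_n(k,N)=\binom{N}{n}\,{}_3F_2\!\left(\begin{matrix}-k,\ k+\alpha+\beta+1,\ -n\\ \alpha+1,\ -N\end{matrix}\;\Big|\;1\right),$$ the terminating series $\sum_{j=0}^{\min(n,k)}\frac{(-k)_j(k+\alpha+\beta+1)_j(-n)_j}{j!(\alpha+1)_j(-N)_j}$ with $(a)_j=a(a+1)\cdots(a+j-1)$. Operator products mean composition. *)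

theory Defs
  imports Complex_Main
begin

text \<open>A vector of the Verma module V_lam is encoded by its coefficient function
  c :: nat => complex, meaning sum_n c n |lam,n>.  Vectors of W = V_l1 (x) V_l2 are
  coefficient functions v :: nat * nat => complex, meaning
  sum_(n,m) v (n,m) |l1,n> (x) |l2,m>  (elements of W have finite support).\<close>

type_synonym vvec = "nat \<Rightarrow> complex"
type_synonym wvec = "nat \<times> nat \<Rightarrow> complex"

text \<open>Verma module action: H|n> = (lam+2n)|n>, E|n> = |n+1>, F|n> = -n(n+lam-1)|n-1>.\<close>
definition vH :: "complex \<Rightarrow> vvec \<Rightarrow> vvec" where
  "vH lam c = (\<lambda>n. (lam + 2 * of_nat n) * c n)"
definition vE :: "vvec \<Rightarrow> vvec" where
  "vE c = (\<lambda>n. if n = 0 then 0 else c (n - 1))"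
definition vF :: "complex \<Rightarrow> vvec \<Rightarrow> vvec" where
  "vF lam c = (\<lambda>n. - (of_nat (Suc n) * (of_nat (Suc n) + lam - 1)) * c (Suc n))"

text \<open>The inverse of the diagonal operator H + lam on V_lam (eigenvalue 2 lam + 2n).\<close>
definition vHplus_inv :: "complex \<Rightarrow> vvec \<Rightarrow> vvec" where
  "vHplus_inv lam c = (\<lambda>n. c n / (lam + 2 * of_nat n + lam))"

definition tens1 :: "(vvec \<Rightarrow> vvec) \<Rightarrow> wvec \<Rightarrow> wvec" where
  "tens1 A v = (\<lambda>(n, m). A (\<lambda>n'. v (n', m)) n)"
definition tens2 :: "(vvec \<Rightarrow> vvec) \<Rightarrow> wvec \<Rightarrow> wvec" where
  "tens2 B v = (\<lambda>(n, m). B (\<lambda>m'. v (n, m')) m)"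

definition comm :: "(wvec \<Rightarrow> wvec) \<Rightarrow> (wvec \<Rightarrow> wvec) \<Rightarrow> wvec \<Rightarrow> wvec" where
  "comm A B v = (\<lambda>p. A (B v) p - B (A v) p)"

definition DeltaH :: "complex \<Rightarrow> complex \<Rightarrow> wvec \<Rightarrow> wvec" where
  "DeltaH l1 l2 v = (\<lambda>p. tens1 (vH l1) v p + tens2 (vH l2) v p)"

definition DeltaE :: "wvec \<Rightarrow> wvec" where
  "DeltaE v = (\<lambda>p. tens1 vE v p + tens2 vE v p)"

definition DeltaF :: "complex \<Rightarrow> complex \<Rightarrow> complex \<Rightarrow> wvec \<Rightarrow> wvec" where
  "DeltaF l1 l2 a v =
     (let b = l1 + l2 - a - 2;
          u1 = tens1 (vHplus_inv l1) (tens1 (vF l1) v);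
          u2 = tens2 (vHplus_inv l2) (tens2 (vF l2) v)
      in (\<lambda>p. (tens1 (vH l1) u1 p - (l1 - 2 * a - 2) * u1 p)
                + (tens2 (vH l2) u2 p - (l2 - 2 * b - 2) * u2 p)))"

text \<open>R_n(k,N) = binom N n * 3F2(-k, k+a+b+1, -n; a+1, -N; 1), terminating series.\<close>
definition Rcoef :: "complex \<Rightarrow> complex \<Rightarrow> nat \<Rightarrow> nat \<Rightarrow> nat \<Rightarrow> complex" where
  "Rcoef a b n k N = of_nat (N choose n) *
     (\<Sum>j = 0..min n k. pochhammer (- of_nat k) j * pochhammer (of_nat k + a + b + 1) j
        * pochhammer (- of_nat n) j
        / (fact j * pochhammer (a + 1) j * pochhammer (- of_nat N) j))"

definition wkN :: "complex \<Rightarrow> complex \<Rightarrow> nat \<Rightarrow> nat \<Rightarrow> wvec" where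
  "wkN a b k N = (\<lambda>(n, m). if n + m = N then Rcoef a b n k N else 0)"

end

theory Submission
  imports Defs "HOL-Computational_Algebra.Formal_Power_Series"
begin


lemma DH_eq: "DeltaH l1 l2 v (n,m) = (l1+l2+2*of_nat n+2*of_nat m) * v(n,m)"
  by (simp add: DeltaH_def tens1_def tens2_def vH_def algebra_simps)

lemma DE_eq: "DeltaE v (n,m) = (if n=0 then 0 else v(n-1,m)) + (if m=0 then 0 else v(n,m-1))"
  by (simp add: DeltaE_def tens1_def tens2_def vE_def)

lemma canc: "(L::complex) \<noteq> 0 \<Longrightarrow> - (c * L) * x / (2 * L) = - c * x / 2"
  by (simp add: field_simps)

lemma DF_eq:
  assumes l1: "\<forall>n::nat. l1 \<noteq> - of_nat n"
    and l2: "\<forall>n::nat. l2 \<noteq> - of_nat n"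
  shows "DeltaF l1 l2 a v (n,m) = - ((of_nat n+1)*(of_nat n+a+1)*v(Suc n,m))
      - (of_nat m+1)*(of_nat m+(l1+l2-a-2)+1)*v(n,Suc m)"
proof -
  have h1: "l1 + of_nat n \<noteq> 0" using l1 by (metis add.commute add_eq_0_iff)
  have h2: "l2 + of_nat m \<noteq> 0" using l2 by (metis add.commute add_eq_0_iff)
  have e1: "l1 + 2 * of_nat n + l1 = 2 * (l1 + of_nat n)" by simp
  have e2: "l2 + 2 * of_nat m + l2 = 2 * (l2 + of_nat m)" by simp
  define x where "x = v (Suc n, m)"
  define y where "y = v (n, Suc m)"
  have t1: "(l1 + 2 * of_nat n) * (- (of_nat (Suc n) * (of_nat (Suc n) + l1 - 1)) * x / (l1 + 2 * of_nat n + l1))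
     - (l1 - 2 * a - 2) * (- (of_nat (Suc n) * (of_nat (Suc n) + l1 - 1)) * x / (l1 + 2 * of_nat n + l1))
     = - ((of_nat n+1)*(of_nat n+a+1)*x)"
  proof -
    have q: "(- (of_nat (Suc n) * (of_nat (Suc n) + l1 - 1)) * x / (l1 + 2 * of_nat n + l1)) = - of_nat (Suc n) * x / 2"
    proof -
      have "of_nat (Suc n) + l1 - 1 = l1 + of_nat n" by simp
      then show ?thesis unfolding e1 by (simp only: canc[OF h1])
    qed
    show ?thesis unfolding q by (simp add: field_simps)
  qed
  have t2: "(l2 + 2 * of_nat m) * (- (of_nat (Suc m) * (of_nat (Suc m) + l2 - 1)) * y / (l2 + 2 * of_nat m + l2))
     - (l2 - 2 * (l1 + l2 - a - 2) - 2) * (- (of_nat (Suc m) * (of_nat (Suc m) + l2 - 1)) * y / (l2 + 2 * of_nat m + l2))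
     = - ((of_nat m+1)*(of_nat m+(l1+l2-a-2)+1)*y)"
  proof -
    have q: "(- (of_nat (Suc m) * (of_nat (Suc m) + l2 - 1)) * y / (l2 + 2 * of_nat m + l2)) = - of_nat (Suc m) * y / 2"
    proof -
      have "of_nat (Suc m) + l2 - 1 = l2 + of_nat m" by simp
      then show ?thesis unfolding e2 by (simp only: canc[OF h2])
    qed
    show ?thesis unfolding q by (simp add: field_simps)
  qed
  show ?thesis
    unfolding DeltaF_def Let_def tens1_def tens2_def vH_def vF_def vHplus_inv_def
    using t1 t2 by (simp add: x_def y_def)
qed

lemma partA:
  assumes l1: "\<forall>n::nat. l1 \<noteq> - of_nat n"
    and l2: "\<forall>n::nat. l2 \<noteq> - of_nat n"
  shows "comm (DeltaH l1 l2) DeltaE v = (\<lambda>p. 2 * DeltaE v p)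
          \<and> comm (DeltaH l1 l2) (DeltaF l1 l2 a) v = (\<lambda>p. - 2 * DeltaF l1 l2 a v p)
          \<and> comm DeltaE (DeltaF l1 l2 a) v = DeltaH l1 l2 v"
proof (intro conjI ext)
  fix p :: "nat \<times> nat" obtain n m where p: "p = (n,m)" by (cases p)
  show "comm (DeltaH l1 l2) DeltaE v p = 2 * DeltaE v p"
    unfolding p comm_def DH_eq DE_eq
    by (cases n; cases m) (simp_all add: DH_eq algebra_simps)
  show "comm (DeltaH l1 l2) (DeltaF l1 l2 a) v p = - 2 * DeltaF l1 l2 a v p"
    unfolding p comm_def DH_eq DF_eq[OF l1 l2]
    by (simp add: DH_eq algebra_simps)
  show "comm DeltaE (DeltaF l1 l2 a) v p = DeltaH l1 l2 v p"
    unfolding p comm_def DH_eq DE_eq 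
    by (cases n; cases m) (simp_all add: DF_eq[OF l1 l2] DE_eq algebra_simps)
qed



definition TT :: "complex \<Rightarrow> complex \<Rightarrow> nat \<Rightarrow> nat \<Rightarrow> complex" where
  "TT a b k j = pochhammer (- of_nat k) j * pochhammer (of_nat k + a + b + 1) j
        / (fact j * pochhammer (a + 1) j)"

lemma TT0: "j > k \<Longrightarrow> TT a b k j = 0"
  by (simp add: TT_def pochhammer_of_nat_eq_0_lemma)

lemma choose_step: "j < n \<Longrightarrow> j < N \<Longrightarrow>
   (N - j) * ((N - Suc j) choose (n - Suc j)) = (n - j) * ((N - j) choose (n - j))"
proof -
  assume "j < n" "j < N"
  then obtain p q where p: "n - j = Suc p" and q: "N - j = Suc q"
    by (metis Suc_diff_Suc)
  have "n - Suc j = p" "N - Suc j = q" using p q by auto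
  then show ?thesis unfolding p q using Suc_times_binomial[of p q] by (simp add: mult.commute)
qed

lemma Cpoch: "j \<le> n \<Longrightarrow> j \<le> N \<Longrightarrow>
  (of_nat (N choose n) :: complex) * pochhammer (- of_nat n) j
   = pochhammer (- of_nat N) j * of_nat ((N - j) choose (n - j))"
proof (induction j)
  case 0 then show ?case by simp
next
  case (Suc j)
  then have jn: "j < n" "j < N" by auto
  have cs: "(of_nat (N - j) :: complex) * of_nat ((N - Suc j) choose (n - Suc j))
      = of_nat (n - j) * of_nat ((N - j) choose (n - j))"
    using choose_step[OF jn] by (metis of_nat_mult)
  have e1: "(of_nat (N - j) :: complex) = of_nat N - of_nat j" using jn by (simp add: of_nat_diff)
  have e2: "(of_nat (n - j) :: complex) = of_nat n - of_nat j" using jn by (simp add: of_nat_diff)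
  have "(of_nat (N choose n) :: complex) * pochhammer (- of_nat n) (Suc j)
     = pochhammer (- of_nat N) j * of_nat ((N - j) choose (n - j)) * (- of_nat n + of_nat j)"
    using Suc by (simp add: pochhammer_Suc mult.assoc[symmetric])
  also have "\<dots> = - (pochhammer (- of_nat N) j * (of_nat (n - j) * of_nat ((N - j) choose (n - j))))"
    unfolding e2 by (simp add: algebra_simps)
  also have "\<dots> = - (pochhammer (- of_nat N) j * (of_nat (N - j) * of_nat ((N - Suc j) choose (n - Suc j))))"
    unfolding cs ..
  also have "\<dots> = pochhammer (- of_nat N) (Suc j) * of_nat ((N - Suc j) choose (n - Suc j))"
    unfolding e1 by (simp add: pochhammer_Suc algebra_simps)
  finally show ?case .
qed

lemma R_alt: assumes "k \<le> N"
  shows "Rcoef a b n k N = (\<Sum>j=0..n. TT a b k j * of_nat ((N - j) choose (n - j)))"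
proof -
  have "Rcoef a b n k N = (\<Sum>j=0..min n k. TT a b k j * of_nat ((N - j) choose (n - j)))"
    unfolding Rcoef_def sum_distrib_left
  proof (rule sum.cong[OF refl])
    fix j assume j: "j \<in> {0..min n k}"
    then have jn: "j \<le> n" "j \<le> N" using assms by auto
    have nz: "pochhammer (- of_nat N :: complex) j \<noteq> 0"
      using jn by (auto simp: pochhammer_eq_0_iff)
    have "of_nat (N choose n) *
        (pochhammer (- of_nat k) j * pochhammer (of_nat k + a + b + 1) j * pochhammer (- of_nat n) j /
         (fact j * pochhammer (a + 1) j * pochhammer (- of_nat N) j))
      = TT a b k j * ((of_nat (N choose n) * pochhammer (- of_nat n) j) / pochhammer (- of_nat N) j)"
      unfolding TT_def by (simp add: field_simps)
    also have "\<dots> = TT a b k j * of_nat ((N - j) choose (n - j))"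
      unfolding Cpoch[OF jn] using nz by simp
    finally show "of_nat (N choose n) *
        (pochhammer (- of_nat k) j * pochhammer (of_nat k + a + b + 1) j * pochhammer (- of_nat n) j /
         (fact j * pochhammer (a + 1) j * pochhammer (- of_nat N) j))
      = TT a b k j * of_nat ((N - j) choose (n - j))" .
  qed
  also have "\<dots> = (\<Sum>j=0..n. TT a b k j * of_nat ((N - j) choose (n - j)))"
    by (rule sum.mono_neutral_left) (auto simp: TT0)
  finally show ?thesis .
qed

lemma pascal: assumes "k \<le> N"
  shows "Rcoef a b n k (Suc N) = (if n = 0 then 0 else Rcoef a b (n - 1) k N) + Rcoef a b n k N"
proof (cases n)
  case 0
  then show ?thesis using assms by (simp add: R_alt)
next
  case (Suc n')
  have kN: "k \<le> Suc N" using assms by simp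
  have "Rcoef a b n k (Suc N) = (\<Sum>j=0..Suc n'. TT a b k j * of_nat ((Suc N - j) choose (Suc n' - j)))"
    using R_alt[OF kN] Suc by simp
  also have "\<dots> = (\<Sum>j=0..Suc n'. TT a b k j * (if j \<le> n' then of_nat ((N - j) choose (n' - j)) else 0)
                    + TT a b k j * of_nat ((N - j) choose (Suc n' - j)))"
  proof (rule sum.cong[OF refl])
    fix j assume j: "j \<in> {0..Suc n'}"
    show "TT a b k j * of_nat ((Suc N - j) choose (Suc n' - j)) =
       TT a b k j * (if j \<le> n' then of_nat ((N - j) choose (n' - j)) else 0) + TT a b k j * of_nat ((N - j) choose (Suc n' - j))"
    proof (cases "j \<le> k")
      case False then show ?thesis by (simp add: TT0)
    next
      case True
      then have jN: "j \<le> N" using assms by simp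
      show ?thesis
      proof (cases "j = Suc n'")
        case True then show ?thesis by simp
      next
        case False
        then have "j \<le> n'" using j by auto
        then have "Suc n' - j = Suc (n' - j)" "Suc N - j = Suc (N - j)" using jN by auto
        then show ?thesis by (simp add: algebra_simps)
      qed
    qed
  qed
  also have "\<dots> = (\<Sum>j=0..Suc n'. TT a b k j * (if j \<le> n' then of_nat ((N - j) choose (n' - j)) else 0))
                 + Rcoef a b n k N"
    using R_alt[OF assms] Suc by (simp add: sum.distrib)
  also have "(\<Sum>j=0..Suc n'. TT a b k j * (if j \<le> n' then of_nat ((N - j) choose (n' - j)) else 0))
       = (\<Sum>j=0..n'. TT a b k j * of_nat ((N - j) choose (n' - j)))"
    by (simp add: sum.atLeast0_atMost_Suc)
  finally show ?thesis using R_alt[OF assms] Suc by simp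
qed

lemma negsuc: "(1::complex) + a = - of_nat i \<Longrightarrow> a = - of_nat (Suc i)"
proof -
  assume h: "1 + a = - of_nat i"
  have "a = (1 + a) - 1" by simp
  also have "\<dots> = - of_nat (Suc i)" unfolding h by simp
  finally show ?thesis .
qed

lemma canc2: "(s::complex) \<noteq> 0 \<Longrightarrow> e \<noteq> 0 \<Longrightarrow> Q \<noteq> 0 \<Longrightarrow>
   s * e * (K * X / s * (P * D / (Q * e))) = K * D * (X * (P / Q))"
  by (simp add: field_simps)

lemma R_big: "N < n \<Longrightarrow> Rcoef a b n k N = 0"
  by (simp add: Rcoef_def)

lemma DE_w: assumes "k \<le> N" shows "DeltaE (wkN a b k N) = wkN a b k (Suc N)"
proof (rule ext)
  fix p :: "nat \<times> nat" obtain n m where p: "p = (n,m)" by (cases p)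
  show "DeltaE (wkN a b k N) p = wkN a b k (Suc N) p"
    unfolding p DE_eq wkN_def using pascal[OF assms, of a b]
    by (cases n; cases m) (auto simp: R_big)
qed

lemma DH_w: "DeltaH l1 l2 (wkN a b k N) = (\<lambda>p. (l1 + l2 + 2 * of_nat N) * wkN a b k N p)"
proof (rule ext)
  fix p :: "nat \<times> nat" obtain n m where p: "p = (n,m)" by (cases p)
  show "DeltaH l1 l2 (wkN a b k N) p = (l1 + l2 + 2 * of_nat N) * wkN a b k N p"
    unfolding p DH_eq by (auto simp: wkN_def)
qed

lemma closed:
  assumes a: "\<forall>n::nat. a \<noteq> - of_nat (Suc n)" and nk: "n \<le> k"
  shows "Rcoef a b n k k = of_nat (k choose n) *
     (pochhammer (a + 1 - (of_nat k + a + b + 1)) n / pochhammer (a+1) n)"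
proof -
  have "Rcoef a b n k k = of_nat (k choose n) *
     (\<Sum>j=0..n. pochhammer (of_nat k + a + b + 1) j * pochhammer (- of_nat n) j
        / (of_nat (fact j) * pochhammer (a + 1) j))"
  proof -
    have mn: "min n k = n" using nk by simp
    show ?thesis unfolding Rcoef_def mn
  proof (intro arg_cong[where f="\<lambda>x. of_nat (k choose n) * x"] sum.cong[OF refl])
    fix j assume "j \<in> {0..n}"
    then have "pochhammer (- of_nat k :: complex) j \<noteq> 0" using nk
      by (auto simp: pochhammer_eq_0_iff)
    then show "pochhammer (- of_nat k) j * pochhammer (of_nat k + a + b + 1) j * pochhammer (- of_nat n) j /
         (fact j * pochhammer (a + 1) j * pochhammer (- of_nat k) j) =
         pochhammer (of_nat k + a + b + 1) j * pochhammer (- of_nat n) j / (of_nat (fact j) * pochhammer (a + 1) j)"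
      by (simp add: field_simps)
  qed
  qed
  also have "\<dots> = of_nat (k choose n) *
     (pochhammer (a + 1 - (of_nat k + a + b + 1)) n / pochhammer (a+1) n)"
  proof -
    have "\<forall>i \<in> {0..< n}. a + 1 \<noteq> - of_nat i"
    proof
      fix i assume "i \<in> {0..<n}"
      show "a + 1 \<noteq> - of_nat i"
      proof
        assume "a + 1 = - of_nat i"
        then have "1 + a = - of_nat i" by (simp add: add.commute)
        then have "a = - of_nat (Suc i)" by (rule negsuc)
        then show False using a by blast
      qed
    qed
    from Vandermonde_pochhammer[OF this, of "of_nat k + a + b + 1"] show ?thesis by simp
  qed
  finally show ?thesis .
qed

lemma absorb: "of_nat (Suc n) * (of_nat (k choose Suc n) :: complex) = of_nat (k - n) * of_nat (k choose n)"
proof -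
  have "Suc n * (k choose Suc n) = (k - n) * (k choose n)"
    using binomial_absorption[of n k] binomial_absorb_comp[of k n] by simp
  then show ?thesis by (metis of_nat_mult)
qed

lemma DF_kk:
  assumes l1: "\<forall>n::nat. l1 \<noteq> - of_nat n"
    and l2: "\<forall>n::nat. l2 \<noteq> - of_nat n"
    and a: "\<forall>n::nat. a \<noteq> - of_nat (Suc n)"
  shows "DeltaF l1 l2 a (wkN a (l1 + l2 - a - 2) k k) = (\<lambda>p. 0)"
proof (rule ext)
  fix p :: "nat \<times> nat" obtain n m where p: "p = (n,m)" by (cases p)
  define b where "b = l1 + l2 - a - 2"
  show "DeltaF l1 l2 a (wkN a (l1 + l2 - a - 2) k k) p = 0"
  proof (cases "Suc n + m = k")
    case False then show ?thesis unfolding p DF_eq[OF l1 l2] by (simp add: wkN_def)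
  next
    case True
    define d where "d = a + 1 - (of_nat k + a + b + 1)"
    define P where "P = pochhammer d n"
    define Q where "Q = pochhammer (a+1) n"
    define X where "X = (of_nat (k choose n) :: complex)"
    define Y where "Y = (of_nat (k choose Suc n) :: complex)"
    have Qnz: "Q \<noteq> 0" unfolding Q_def
    proof
      assume "pochhammer (a + 1) n = 0"
      then obtain i where "1 + a = - of_nat i" by (auto simp: pochhammer_eq_0_iff add.commute)
      then have "a = - of_nat (Suc i)" by (rule negsuc)
      then show False using a by blast
    qed
    have anz: "a + 1 + of_nat n \<noteq> 0"
    proof
      assume h: "a + 1 + of_nat n = 0"
      have "a = (a + 1 + of_nat n) - of_nat (Suc n)" by simp
      then have "a = - of_nat (Suc n)" unfolding h by simp
      then show False using a by blast
    qed
    have Y: "Y = of_nat (k - n) * X / of_nat (Suc n)"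
      unfolding X_def Y_def
      by (subst nonzero_eq_divide_eq[OF of_nat_neq_0]) (metis absorb mult.commute)
    have R1: "Rcoef a b (Suc n) k k = Y * (P * (d + of_nat n) / (Q * (a + 1 + of_nat n)))"
      using closed[OF a, of "Suc n" k b] True unfolding Y_def P_def Q_def d_def
      by (simp add: pochhammer_Suc)
    have R0: "Rcoef a b n k k = X * (P / Q)"
      using closed[OF a, of n k b] True unfolding X_def P_def Q_def d_def by simp
    have knm: "k - n = Suc m" using True by simp
    have m1: "(of_nat m :: complex) + 1 = of_nat (k - n)" unfolding knm by simp
    have kn: "(of_nat (k - n) :: complex) = of_nat k - of_nat n" using True by (simp add: of_nat_diff)
    have dd: "d + of_nat n + (of_nat (k - n) + b) = 0" unfolding kn d_def by simp
    have snz: "(of_nat (Suc n) :: complex) \<noteq> 0" by (rule of_nat_neq_0)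
    have t1: "(of_nat n+1)*(of_nat n+a+1)*(of_nat (k - n) * X / of_nat (Suc n) * (P * (d + of_nat n) / (Q * (a + 1 + of_nat n))))
       = of_nat (k - n) * (d + of_nat n) * (X * (P / Q))"
    proof -
      have u: "of_nat n + 1 = (of_nat (Suc n)::complex)" "of_nat n + a + 1 = a + 1 + of_nat n" by simp_all
      show ?thesis unfolding u by (rule canc2[OF snz anz Qnz])
    qed
    have "DeltaF l1 l2 a (wkN a b k k) (n, m) =
      - ((of_nat n+1)*(of_nat n+a+1)*Rcoef a b (Suc n) k k)
      - (of_nat m+1)*(of_nat m+b+1)*Rcoef a b n k k"
      unfolding DF_eq[OF l1 l2] b_def using True by (simp add: wkN_def)
    also have "\<dots> = - (of_nat (k - n) * (d + of_nat n) * (X * (P / Q)))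
        - of_nat (k - n) * (of_nat (k - n) + b) * (X * (P / Q))"
      unfolding R1 R0 Y t1 using m1 by (simp add: add.assoc[symmetric] add.commute[of _ b])
    also have "\<dots> = - (of_nat (k - n) * (X * (P / Q))) * (d + of_nat n + (of_nat (k - n) + b))"
      by (simp add: algebra_simps add_divide_distrib)
    also have "\<dots> = 0" unfolding dd by simp
    finally show ?thesis unfolding p b_def .
  qed
qed


lemma DE_lin: "DeltaE (\<lambda>p. c * w p) = (\<lambda>p. c * DeltaE w p)"
proof (rule ext)
  fix p :: "nat \<times> nat" obtain n m where p: "p = (n,m)" by (cases p)
  show "DeltaE (\<lambda>p. c * w p) p = c * DeltaE w p" unfolding p DE_eq by (simp add: algebra_simps)
qed

lemma DF_w:
  assumes l1: "\<forall>n::nat. l1 \<noteq> - of_nat n"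
    and l2: "\<forall>n::nat. l2 \<noteq> - of_nat n"
    and a: "\<forall>n::nat. a \<noteq> - of_nat (Suc n)"
  shows "DeltaF l1 l2 a (wkN a (l1 + l2 - a - 2) k (k + d)) =
     (\<lambda>p. - (of_nat d * (of_nat (k + d) + of_nat k + l1 + l2 - 1)) * wkN a (l1 + l2 - a - 2) k (k + d - 1) p)"
proof (induction d)
  case 0
  then show ?case using DF_kk[OF l1 l2 a, of k] by simp
next
  case (Suc d)
  define b where "b = l1 + l2 - a - 2"
  define w where "w = wkN a b k (k + d)"
  define c where "c = - (of_nat d * (of_nat (k + d) + of_nat k + l1 + l2 - 1))"
  have IH: "DeltaF l1 l2 a w = (\<lambda>p. c * wkN a b k (k + d - 1) p)"
    using Suc.IH unfolding w_def b_def c_def .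
  have ws: "wkN a b k (k + Suc d) = DeltaE w" unfolding w_def using DE_w[of k "k + d" a b] by simp
  have cm: "comm DeltaE (DeltaF l1 l2 a) w = DeltaH l1 l2 w" using partA[OF l1 l2, of w a] by blast
  have e1: "DeltaE (DeltaF l1 l2 a w) = (\<lambda>p. c * w p)"
  proof (cases d)
    case 0 then show ?thesis unfolding IH DE_lin c_def by simp
  next
    case (Suc d')
    then have "DeltaE (wkN a b k (k + d - 1)) = w" unfolding w_def using DE_w[of k "k + d - 1" a b] by simp
    then show ?thesis unfolding IH DE_lin by simp
  qed
  show ?case
  proof (rule ext)
    fix p
    have "DeltaF l1 l2 a (wkN a b k (k + Suc d)) p = DeltaE (DeltaF l1 l2 a w) p - DeltaH l1 l2 w p"
      using fun_cong[OF cm, of p] unfolding ws comm_def by (simp add: algebra_simps)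
    also have "\<dots> = (c - (l1 + l2 + 2 * of_nat (k + d))) * w p"
      unfolding e1 by (simp add: w_def DH_w algebra_simps)
    also have "\<dots> = - (of_nat (Suc d) * (of_nat (k + Suc d) + of_nat k + l1 + l2 - 1)) * wkN a b k (k + Suc d - 1) p"
      unfolding c_def w_def by (simp add: algebra_simps)
    finally show "DeltaF l1 l2 a (wkN a (l1 + l2 - a - 2) k (k + Suc d)) p =
       - (of_nat (Suc d) * (of_nat (k + Suc d) + of_nat k + l1 + l2 - 1)) * wkN a (l1 + l2 - a - 2) k (k + Suc d - 1) p"
      unfolding b_def .
  qed
qed

theorem mainTheorem3:
  fixes l1 l2 a :: complex
  assumes l1: "\<forall>n::nat. l1 \<noteq> - of_nat n"
    and l2: "\<forall>n::nat. l2 \<noteq> - of_nat n"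
    and a: "\<forall>n::nat. a \<noteq> - of_nat (Suc n)"
  shows "(\<forall>v::wvec. finite {p. v p \<noteq> 0} \<longrightarrow>
            comm (DeltaH l1 l2) DeltaE v = (\<lambda>p. 2 * DeltaE v p)
          \<and> comm (DeltaH l1 l2) (DeltaF l1 l2 a) v = (\<lambda>p. - 2 * DeltaF l1 l2 a v p)
          \<and> comm DeltaE (DeltaF l1 l2 a) v = DeltaH l1 l2 v)
       \<and> (\<forall>k N :: nat. k \<le> N \<longrightarrow>
            (let b = l1 + l2 - a - 2 in
              DeltaH l1 l2 (wkN a b k N) = (\<lambda>p. (l1 + l2 + 2 * of_nat N) * wkN a b k N p)
            \<and> DeltaE (wkN a b k N) = wkN a b k (Suc N)
            \<and> DeltaF l1 l2 a (wkN a b k N) =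
                (if N = k then (\<lambda>p. 0)
                 else (\<lambda>p. - (of_nat (N - k) * (of_nat N + of_nat k + l1 + l2 - 1))
                              * wkN a b k (N - 1) p))))"
proof (intro conjI allI impI)
  fix v :: wvec
  show "comm (DeltaH l1 l2) DeltaE v = (\<lambda>p. 2 * DeltaE v p)"
       "comm (DeltaH l1 l2) (DeltaF l1 l2 a) v = (\<lambda>p. - 2 * DeltaF l1 l2 a v p)"
       "comm DeltaE (DeltaF l1 l2 a) v = DeltaH l1 l2 v"
    using partA[OF l1 l2, of v a] by blast+
next
  fix k N :: nat assume kN: "k \<le> N"
  then obtain d where d: "N = k + d" using le_Suc_ex by blast
  have F: "DeltaF l1 l2 a (wkN a (l1 + l2 - a - 2) k N) =
     (\<lambda>p. - (of_nat (N - k) * (of_nat N + of_nat k + l1 + l2 - 1)) * wkN a (l1 + l2 - a - 2) k (N - 1) p)"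
    using DF_w[OF l1 l2 a, of k d] unfolding d by simp
  show "let b = l1 + l2 - a - 2 in
              DeltaH l1 l2 (wkN a b k N) = (\<lambda>p. (l1 + l2 + 2 * of_nat N) * wkN a b k N p)
            \<and> DeltaE (wkN a b k N) = wkN a b k (Suc N)
            \<and> DeltaF l1 l2 a (wkN a b k N) =
                (if N = k then (\<lambda>p. 0)
                 else (\<lambda>p. - (of_nat (N - k) * (of_nat N + of_nat k + l1 + l2 - 1))
                              * wkN a b k (N - 1) p))"
    unfolding Let_def using DH_w DE_w[OF kN] F by auto
qed

end
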